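(* Let $n\ge2$ and $\mathbf{F}\in\mathbb{R}^n$ with $F_k>0$ for all $k$ and $F_k\ge F_{k+1}$ for $3\le k\le n-1$. Let $U_i=\frac{i}{3/F_1+\sum_{k=2}^i1/F_k}$ and $V_i=\frac{i-1}{\sum_{k=1}^i1/F_k}$ for $2\le i\le n$; let $u$ be the least index in $\arg\max_{2\le i\le n}U_i$ and $v$ the least index in $\arg\max_{2\le i\le n}V_i$. Assume $V_v>U_u$. Define $\boldsymbol\mu\in\mathbb{R}^n$ by $\mu_2=\frac{V_v}{F_1}-\frac12$, $\mu_k=1-\frac{V_v}{F_k}$ for $3\le k\le v$, and $\mu_k=0$ otherwise. Then: (1) $\mu_k\ge0$ for all $1\le k\le n$; (2) $F_1(\frac12+\mu_2)=F_2\big(\frac12-\mu_2+\sum_{i=3}^v\mu_i\big)=F_k(1-\mu_k)=V_v$ for all $3\le k\le v$; (3) $F_k\le V_v$ for all $v+1\le k\le n$.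
   Context: Note $V_v=\frac{v-1}{\sum_{k=1}^v1/F_k}$. *)

theory Defs
  imports Complex_Main
begin

text \<open>Vectors in R^n are represented as functions nat => real, with entries F 1, ..., F n.\<close>

definition U :: "(nat \<Rightarrow> real) \<Rightarrow> nat \<Rightarrow> real" where
  "U F i = real i / (3 / F 1 + (\<Sum>k=2..i. 1 / F k))"

definition V :: "(nat \<Rightarrow> real) \<Rightarrow> nat \<Rightarrow> real" where
  "V F i = (real i - 1) / (\<Sum>k=1..i. 1 / F k)"

definition least_argmax :: "nat \<Rightarrow> (nat \<Rightarrow> real) \<Rightarrow> nat" where
  "least_argmax n W = (LEAST i. 2 \<le> i \<and> i \<le> n \<and> (\<forall>j. 2 \<le> j \<and> j \<le> n \<longrightarrow> W j \<le> W i))"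

definition mu :: "(nat \<Rightarrow> real) \<Rightarrow> nat \<Rightarrow> nat \<Rightarrow> real" where
  "mu F v k = (if k = 2 then V F v / F 1 - 1/2
               else if 3 \<le> k \<and> k \<le> v then 1 - V F v / F k
               else 0)"

end

theory Submission
  imports Defs
begin

lemma la_props:
  fixes W :: "nat \<Rightarrow> real"
  assumes "n \<ge> 2"
  shows "2 \<le> least_argmax n W \<and> least_argmax n W \<le> n
    \<and> (\<forall>j. 2\<le>j \<and> j\<le>n \<longrightarrow> W j \<le> W (least_argmax n W))
    \<and> (\<forall>i. 2\<le>i \<and> i < least_argmax n W \<longrightarrow> (\<exists>j. 2\<le>j \<and> j\<le>n \<and> W j > W i))"
proof -
  let ?P = "\<lambda>i. 2 \<le> i \<and> i \<le> n \<and> (\<forall>j. 2 \<le> j \<and> j \<le> n \<longrightarrow> W j \<le> W i)"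
  have fin: "finite (W ` {2..n})" and ne: "W ` {2..n} \<noteq> {}" using assms by auto
  obtain m where m: "m \<in> {2..n}" "W m = Max (W ` {2..n})"
    using Max_in[OF fin ne] by auto
  have "?P m" using m Max_ge[OF fin] by auto
  hence P: "?P (least_argmax n W)" unfolding least_argmax_def by (rule LeastI)
  have "\<forall>i. 2\<le>i \<and> i < least_argmax n W \<longrightarrow> (\<exists>j. 2\<le>j \<and> j\<le>n \<and> W j > W i)"
  proof (intro allI impI)
    fix i assume i: "2\<le>i \<and> i < least_argmax n W"
    have "\<not> ?P i" using i not_less_Least[of i ?P] unfolding least_argmax_def by blast
    thus "\<exists>j. 2\<le>j \<and> j\<le>n \<and> W j > W i" using i P by (auto simp: not_le)
  qed
  thus ?thesis using P by blast
qed

lemma mono_F: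
  fixes F :: "nat \<Rightarrow> real"
  assumes "\<And>k. 3 \<le> k \<Longrightarrow> k \<le> n - 1 \<Longrightarrow> F k \<ge> F (k + 1)"
    and "3 \<le> a" "a \<le> b" "b \<le> n"
  shows "F b \<le> (F a :: real)"
  using assms(3,4,2)
proof (induction b rule: dec_induct)
  case base then show ?case by simp
next
  case (step b)
  have "F (b+1) \<le> F b" using assms(1)[of b] step by auto
  then show ?case using step by simp
qed

theorem lemma7:
  fixes n :: nat and F :: "nat \<Rightarrow> real"
  assumes "n \<ge> 2"
    and "\<And>k. 1 \<le> k \<Longrightarrow> k \<le> n \<Longrightarrow> F k > 0"
    and "\<And>k. 3 \<le> k \<Longrightarrow> k \<le> n - 1 \<Longrightarrow> F k \<ge> F (k + 1)"
    and "V F (least_argmax n (V F)) > U F (least_argmax n (U F))"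
  shows "(\<forall>k. 1 \<le> k \<and> k \<le> n \<longrightarrow> mu F (least_argmax n (V F)) k \<ge> 0)
    \<and> F 1 * (1/2 + mu F (least_argmax n (V F)) 2) = V F (least_argmax n (V F))
    \<and> F 2 * (1/2 - mu F (least_argmax n (V F)) 2
              + (\<Sum>i=3..least_argmax n (V F). mu F (least_argmax n (V F)) i))
        = V F (least_argmax n (V F))
    \<and> (\<forall>k. 3 \<le> k \<and> k \<le> least_argmax n (V F) \<longrightarrow>
          F k * (1 - mu F (least_argmax n (V F)) k) = V F (least_argmax n (V F)))
    \<and> (\<forall>k. least_argmax n (V F) + 1 \<le> k \<and> k \<le> n \<longrightarrow> F k \<le> V F (least_argmax n (V F)))"
proof -
  define v where "v = least_argmax n (V F)"
  define u where "u = least_argmax n (U F)"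
  define Vv where "Vv = V F v"
  define S where "S = (\<Sum>k=1..v. 1 / F k)"
  have pos: "\<And>k. 1 \<le> k \<Longrightarrow> k \<le> n \<Longrightarrow> F k > 0" by (rule assms(2))
  have vp: "2 \<le> v" "v \<le> n" "\<And>j. 2\<le>j \<Longrightarrow> j\<le>n \<Longrightarrow> V F j \<le> Vv"
    "\<And>i. 2\<le>i \<Longrightarrow> i < v \<Longrightarrow> \<exists>j. 2\<le>j \<and> j\<le>n \<and> V F j > V F i"
    using la_props[OF assms(1), of "V F"] unfolding v_def Vv_def by blast+
  have up: "\<And>j. 2\<le>j \<Longrightarrow> j\<le>n \<Longrightarrow> U F j \<le> U F u"
    using la_props[OF assms(1), of "U F"] unfolding u_def by blast
  have VU: "Vv > U F u" using assms(4) unfolding Vv_def v_def u_def .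
  have Spos: "S > 0" unfolding S_def
    using vp(1,2) by (intro sum_pos) (auto intro: pos)
  have VvS: "Vv * S = real v - 1" unfolding Vv_def V_def S_def[symmetric] using Spos by simp
  have F1: "F 1 > 0" using pos assms(1) by auto
  have F2: "F 2 > 0" using pos assms(1) by auto
  have Ssplit: "S = 1/F 1 + 1/F 2 + (\<Sum>k=3..v. 1 / F k)"
  proof -
    have "{1..v} = insert 1 (insert 2 {3..v})" using vp(1) by auto
    thus ?thesis unfolding S_def by simp
  qed
  have "U F v \<le> U F u" using up vp by auto
  hence UV: "U F v < Vv" using VU by simp
  have Uv: "U F v = real v / (2 / F 1 + S)"
  proof -
    have "(\<Sum>k=2..v. 1 / F k) = S - 1/F 1"
    proof -
      have "{1..v} = insert 1 {2..v}" using vp(1) by auto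
      thus ?thesis unfolding S_def by simp
    qed
    thus ?thesis unfolding U_def by simp
  qed
  have m2: "Vv \<ge> F 1 / 2"
  proof -
    have d: "2 / F 1 + S > 0" using F1 Spos by (simp add: add_pos_pos)
    have "real v < Vv * (2 / F 1 + S)" using UV Uv d by (simp add: divide_less_eq)
    hence "real v < 2 * Vv / F 1 + real v - 1" using VvS by (simp add: algebra_simps)
    hence "1 < 2 * Vv / F 1" by simp
    hence "F 1 < 2 * Vv" using F1 by (simp add: less_divide_eq)
    thus ?thesis by simp
  qed
  have Fv: "Vv < F v" if v3: "3 \<le> v"
  proof -
    obtain j where j: "2\<le>j" "j\<le>n" "V F j > V F (v-1)" proof -
      have "2 \<le> v-1" "v-1 < v" using v3 by auto
      from vp(4)[OF this] show ?thesis using that by blast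
    qed
    have lt: "V F (v-1) < Vv" using vp(3)[OF j(1,2)] j(3) by simp
    define S' where "S' = (\<Sum>k=1..v-1. 1 / F k)"
    have SS': "S = S' + 1 / F v"
    proof -
      have "{1..v} = insert v {1..v-1}" using v3 by auto
      moreover have "v \<notin> {1..v-1}" using v3 by auto
      ultimately show ?thesis unfolding S_def S'_def by (simp add: add.commute)
    qed
    have S'pos: "S' > 0" unfolding S'_def using v3 vp(2) by (intro sum_pos) (auto intro: pos)
    have "V F (v-1) = (real v - 2) / S'" unfolding V_def S'_def[symmetric] using v3 by (simp add: of_nat_diff)
    hence "(real v - 2) / S' < Vv" using lt by simp
    hence "real v - 2 < Vv * S'" using S'pos by (simp add: divide_less_eq)
    hence "real v - 2 < real v - 1 - Vv / F v" using VvS SS' by (simp add: algebra_simps)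
    hence "Vv / F v < 1" by simp
    thus ?thesis using pos[of v] v3 vp(2) by (simp add: divide_less_eq)
  qed
  have geF: "Vv \<le> F k" if "3 \<le> k" "k \<le> v" for k
    using Fv[of] that mono_F[where F=F and n=n, OF assms(3), of k v] vp(2) by fastforce
  have part3: "F k \<le> Vv" if "v + 1 \<le> k" "k \<le> n" for k
  proof -
    have v1: "V F (v+1) \<le> Vv" using vp(3)[of "v+1"] that vp(1) by auto
    have Sv1: "(\<Sum>k=1..v+1. 1 / F k) = S + 1 / F (v+1)" unfolding S_def by simp
    have Fp: "F (v+1) > 0" using pos that by auto
    have d: "S + 1 / F (v+1) > 0" using Spos Fp by (simp add: add_pos_pos)
    have "real v / (S + 1 / F (v+1)) \<le> Vv" using v1 unfolding V_def Sv1 by simp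
    hence "real v \<le> Vv * S + Vv / F (v+1)" using d by (simp add: divide_le_eq algebra_simps)
    hence "1 \<le> Vv / F (v+1)" using VvS by simp
    hence a: "F (v+1) \<le> Vv" using Fp by (simp add: le_divide_eq)
    have "F k \<le> F (v+1)" using mono_F[where F=F and n=n, OF assms(3), of "v+1" k] that vp(1) by auto
    thus ?thesis using a by simp
  qed
  have summu: "(\<Sum>i=3..v. mu F v i) = (real v - 2) - Vv * (\<Sum>k=3..v. 1 / F k)"
  proof -
    have "(\<Sum>i=3..v. mu F v i) = (\<Sum>i=3..v. 1 - Vv / F i)"
      by (rule sum.cong) (auto simp: mu_def Vv_def)
    also have "\<dots> = real v - 2 - Vv * (\<Sum>k=3..v. 1 / F k)"
      using vp(1) by (simp add: sum_subtractf sum_distrib_left of_nat_diff)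
    finally show ?thesis .
  qed
  have p2b: "F 2 * (1/2 - mu F v 2 + (\<Sum>i=3..v. mu F v i)) = Vv"
  proof -
    have "1/2 - mu F v 2 + (\<Sum>i=3..v. mu F v i) = real v - 1 - Vv * (S - 1 / F 2)"
      using summu Ssplit by (simp add: mu_def Vv_def algebra_simps)
    also have "\<dots> = Vv / F 2" using VvS by (simp add: algebra_simps)
    finally show ?thesis using F2 by simp
  qed
  have p1: "\<forall>k. 1 \<le> k \<and> k \<le> n \<longrightarrow> mu F v k \<ge> 0"
  proof (intro allI impI)
    fix k assume k: "1 \<le> k \<and> k \<le> n"
    show "mu F v k \<ge> 0"
    proof (cases "k = 2")
      case True thus ?thesis using m2 F1 by (simp add: mu_def Vv_def[symmetric] le_divide_eq)
    next
      case False
      show ?thesis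
      proof (cases "3 \<le> k \<and> k \<le> v")
        case True
        have "F k > 0" using pos k by auto
        thus ?thesis using geF True False by (simp add: mu_def Vv_def[symmetric] divide_le_eq)
      next
        case c: False thus ?thesis using False unfolding mu_def by auto
      qed
    qed
  qed
  have p2a: "F 1 * (1/2 + mu F v 2) = Vv" using F1 by (simp add: mu_def Vv_def)
  have p2c: "\<forall>k. 3 \<le> k \<and> k \<le> v \<longrightarrow> F k * (1 - mu F v k) = Vv"
  proof (intro allI impI)
    fix k assume k: "3 \<le> k \<and> k \<le> v"
    have "F k > 0" using pos k vp(2) by auto
    thus "F k * (1 - mu F v k) = Vv" using k by (simp add: mu_def Vv_def)
  qed
  show ?thesis using p1 p2a p2b p2c part3 unfolding v_def[symmetric] Vv_def[symmetric] by blast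
qed

end
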